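(* Let $K\subset\mathbb{C}$ be compact and polynomially convex, and let $(q_k)_k$ be a sequence of polynomials with $\deg q_k = n_k\to\infty$. If $(q_k)_k$ centers on $K$, then for every $m=1,2,\ldots$ the sequence of $m$th derivatives $(q_k^{(m)})_k$ also centers on $K$.
   Context: Definition (centering): Let $C\subset\mathbb{C}$ be non-empty and compact and let $(q_k)_k$ be a sequence of polynomials. We say $(q_k)_k$ centers on $C$ if there exist $R>0$ and $k_0$ such that (1) all zeros of $q_k$ lie in the disk $\mathbb{D}(0,R)=\{|z|<R\}$ for all $k\ge k_0$ (in particular $q_k$ is not the zero polynomial for $k\ge k_0$); (2) for every closed $L\subset\mathbb{C}$ with $L\cap C=\emptyset$ there is $M=M(L)$ such that the number of zeros of $q_k$ in $L$, counted with multiplicity, is at most $M$ for all $k\ge k_0$. *)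

theory Defs
  imports "HOL-Analysis.Analysis" "HOL-Computational_Algebra.Polynomial"
begin

definition poly_hull :: "complex set \<Rightarrow> complex set" where
  "poly_hull K = {z. \<forall>p :: complex poly. cmod (poly p z) \<le> (SUP w\<in>K. cmod (poly p w))}"

definition polynomially_convex :: "complex set \<Rightarrow> bool" where
  "polynomially_convex K \<longleftrightarrow> poly_hull K = K"

definition zero_count :: "complex poly \<Rightarrow> complex set \<Rightarrow> nat" where
  "zero_count q L = (\<Sum>z\<in>{z\<in>L. poly q z = 0}. order z q)"

definition centers_on :: "(nat \<Rightarrow> complex poly) \<Rightarrow> complex set \<Rightarrow> bool" where
  "centers_on q C \<longleftrightarrow>
     (\<exists>R>0. \<exists>k0. (\<forall>k\<ge>k0. q k \<noteq> 0 \<and> (\<forall>z. poly (q k) z = 0 \<longrightarrow> cmod z < R)) \<and>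
        (\<forall>L. closed L \<and> L \<inter> C = {} \<longrightarrow> (\<exists>M. \<forall>k\<ge>k0. zero_count (q k) L \<le> M)))"

end

theory Submission
  imports Defs "HOL-Complex_Analysis.Complex_Analysis" "HOL-Computational_Algebra.Fundamental_Theorem_Algebra"
begin


definition lin :: "complex list \<Rightarrow> complex poly" where
  "lin xs = (\<Prod>x\<leftarrow>xs. [:-x,1:])"

lemma lin_Nil[simp]: "lin [] = 1" by (simp add: lin_def)
lemma lin_Cons[simp]: "lin (x#xs) = [:-x,1:] * lin xs" by (simp add: lin_def del: mult_pCons_left)
declare mult_pCons_left[simp del]
lemma lin_append: "lin (xs@ys) = lin xs * lin ys" unfolding lin_def by simp
lemma poly_lin: "poly (lin xs) z = (\<Prod>x\<leftarrow>xs. z - x)" by (induction xs) auto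
lemma lin_nz[simp]: "lin xs \<noteq> 0" by (induction xs) auto

lemma lin_filter: "lin xs = lin (filter P xs) * lin (filter (\<lambda>x. \<not> P x) xs)"
  by (induction xs) (auto simp: mult_ac)

lemma poly_lin_zero: "poly (lin xs) z = 0 \<longleftrightarrow> z \<in> set xs"
  by (induction xs) auto

lemma pderiv_lin:
  assumes "poly (lin xs) z \<noteq> 0"
  shows "poly (pderiv (lin xs)) z = poly (lin xs) z * (\<Sum>x\<leftarrow>xs. 1/(z-x))"
  using assms
proof (induction xs)
  case Nil then show ?case by simp
next
  case (Cons a xs)
  have za: "z - a \<noteq> 0" and nz: "poly (lin xs) z \<noteq> 0" using Cons.prems by auto
  have "poly (pderiv (lin (a#xs))) z = poly (lin xs) z + (z - a) * poly (pderiv (lin xs)) z"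
    by (simp add: pderiv_mult pderiv_pCons)
  also have "\<dots> = (z - a) * poly (lin xs) z * (1/(z-a) + (\<Sum>x\<leftarrow>xs. 1/(z-x)))"
    using Cons.IH[OF nz] za by (simp add: field_simps)
  finally show ?case by simp
qed

lemma norm_lin_le:
  fixes B :: real
  assumes "\<forall>x\<in>set xs. cmod (z - x) \<le> B"
  shows "cmod (poly (lin xs) z) \<le> B ^ length xs"
  using assms
proof (induction xs)
  case Nil then show ?case by simp
next
  case (Cons a xs)
  have "0 \<le> B" using Cons.prems norm_ge_zero[of "z-a"] by (meson list.set_intros(1) order_trans)
  have "cmod (poly (lin (a#xs)) z) = cmod (z - a) * cmod (poly (lin xs) z)"
    by (simp add: norm_mult)
  also have "\<dots> \<le> B * B ^ length xs"
    using Cons \<open>0 \<le> B\<close> by (intro mult_mono) auto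
  finally show ?case by simp
qed

lemma norm_lin_ge:
  assumes "\<forall>x\<in>set xs. b \<le> cmod (z - x)" "0 \<le> b"
  shows "b ^ length xs \<le> cmod (poly (lin xs) z)"
  using assms
proof (induction xs)
  case Nil then show ?case by simp
next
  case (Cons a xs)
  have "b * b ^ length xs \<le> cmod (z - a) * cmod (poly (lin xs) z)"
    using Cons by (intro mult_mono) auto
  also have "\<dots> = cmod (poly (lin (a#xs)) z)"
    by (simp add: norm_mult)
  finally show ?case by simp
qed

lemma norm_pderiv_lin_le:
  fixes B :: real
  assumes "\<forall>x\<in>set xs. cmod (z - x) \<le> B" "1 \<le> B"
  shows "cmod (poly (pderiv (lin xs)) z) \<le> length xs * B ^ length xs"
  using assms
proof (induction xs)
  case Nil then show ?case by simp
next
  case (Cons a xs)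
  have "poly (pderiv (lin (a#xs))) z = poly (lin xs) z + (z - a) * poly (pderiv (lin xs)) z"
    by (simp add: pderiv_mult pderiv_pCons)
  hence "cmod (poly (pderiv (lin (a#xs))) z) \<le> cmod (poly (lin xs) z) + cmod (z - a) * cmod (poly (pderiv (lin xs)) z)"
    by (metis norm_mult norm_triangle_ineq)
  also have "\<dots> \<le> B ^ length xs + B * (length xs * B ^ length xs)"
    using Cons norm_lin_le[of xs z B] by (intro add_mono mult_mono) auto
  also have "\<dots> \<le> B * B ^ length xs + B * (length xs * B ^ length xs)"
    using Cons.prems by (intro add_mono) auto
  also have "\<dots> = (1 + length xs) * (B * B ^ length xs)" by (simp add: algebra_simps)
  finally show ?case by simp
qed

lemma poly_roots_list:
  fixes p :: "complex poly"
  assumes "p \<noteq> 0"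
  obtains xs where "p = smult (lead_coeff p) (lin xs)" "length xs = degree p"
    "set xs = {z. poly p z = 0}" "\<And>L. zero_count p L = length (filter (\<lambda>x. x \<in> L) xs)"
proof -
  obtain xs where xs: "mset xs = proots p" using ex_mset by blast
  have eq: "p = smult (lead_coeff p) (lin xs)"
    using complex_poly_decompose_multiset[of p]
    by (simp add: lin_def prod_mset_prod_list[symmetric] xs)
  have len: "length xs = degree p"
    using size_proots_complex[of p] xs by (metis size_mset)
  have set: "set xs = {z. poly p z = 0}"
    using set_count_proots[OF assms] xs by (metis set_mset_mset)
  have zc: "zero_count p L = length (filter (\<lambda>x. x \<in> L) xs)" for L
  proof -
    have "zero_count p L = (\<Sum>z\<in>{z\<in>L. poly p z = 0}. count_list (filter (\<lambda>x. x \<in> L) xs) z)"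
      unfolding zero_count_def
    proof (intro sum.cong refl)
      fix z assume z: "z \<in> {z\<in>L. poly p z = 0}"
      have "order z p = count (proots p) z" using assms by simp
      also have "\<dots> = count_list xs z" by (simp flip: xs add: count_mset)
      also have "\<dots> = count_list (filter (\<lambda>x. x \<in> L) xs) z"
        using z by (induction xs) auto
      finally show "order z p = \<dots>" .
    qed
    also have "\<dots> = length (filter (\<lambda>x. x \<in> L) xs)"
    proof (rule sum_count_set)
      show "set (filter (\<lambda>x. x \<in> L) xs) \<subseteq> {z \<in> L. poly p z = 0}" using set by auto
      show "finite {z \<in> L. poly p z = 0}" using poly_roots_finite[OF assms] by simp
    qed
    finally show ?thesis .
  qed
  show ?thesis using that eq len set zc by blast
qed

lemma re_div_pos:
  fixes z x :: complex
  assumes "cmod x < cmod z"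
  shows "0 < Re (z / (z - x))"
proof -
  have zx: "z - x \<noteq> 0" using assms by auto
  have "Re (z * cnj x) \<le> cmod (z * cnj x)" by (rule complex_Re_le_cmod)
  also have "\<dots> = cmod z * cmod x" by (simp add: norm_mult)
  also have "\<dots> < cmod z * cmod z" using assms by (intro mult_strict_left_mono) auto
  finally have a: "Re (z * cnj x) < cmod z ^ 2" by (simp add: power2_eq_square)
  have b: "Re (z * cnj z) = cmod z ^ 2" using cmod_power2[of z] by (simp add: power2_eq_square)
  have "z / (z - x) = z * cnj (z - x) / complex_of_real ((cmod (z - x))^2)"
    by (subst complex_div_cnj) simp
  hence "Re (z / (z - x)) = Re (z * cnj (z - x)) / (cmod (z - x))^2"
    by (simp add: Re_divide_of_real)
  moreover have "Re (z * cnj (z - x)) > 0" using a b by (simp add: algebra_simps)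
  moreover have "(cmod (z - x))^2 > 0" using zx by simp
  ultimately show ?thesis by simp
qed

lemma re_div_half:
  fixes z x :: complex
  assumes "cmod x < R" "3 * R \<le> cmod z"
  shows "1/2 \<le> Re (z / (z - x))"
proof -
  have R: "0 < R" using assms(1) norm_ge_zero[of x] by linarith
  have d: "2 * R \<le> cmod (z - x)" using assms norm_triangle_ineq2[of z x] by linarith
  have zx: "z - x \<noteq> 0" using d R by auto
  have eq: "z / (z - x) = 1 + x / (z - x)" using zx by (simp add: field_simps)
  have "cmod (x / (z - x)) = cmod x / cmod (z - x)" by (simp add: norm_divide)
  also have "\<dots> \<le> R / (2 * R)" using d R assms(1) by (intro frac_le) auto
  also have "\<dots> = 1/2" using R by simp
  finally have "cmod (x / (z - x)) \<le> 1/2" .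
  moreover have "- cmod (x / (z - x)) \<le> Re (x / (z - x))"
    using abs_Re_le_cmod[of "x / (z - x)"] by linarith
  ultimately show ?thesis using eq by simp
qed

lemma re_sum_lower:
  fixes z :: complex
  assumes "\<forall>x\<in>set xs. cmod x < R" "3 * R \<le> cmod z"
  shows "length xs / 2 \<le> Re (z * (\<Sum>x\<leftarrow>xs. 1/(z-x)))"
  using assms
proof (induction xs)
  case Nil then show ?case by simp
next
  case (Cons a xs)
  have "z * (\<Sum>x\<leftarrow>a#xs. 1/(z-x)) = z / (z - a) + z * (\<Sum>x\<leftarrow>xs. 1/(z-x))"
    by (simp add: algebra_simps)
  moreover have "1/2 \<le> Re (z / (z - a))" using Cons.prems by (intro re_div_half[of _ R]) auto
  ultimately show ?case using Cons by simp
qed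

lemma re_sum_pos:
  fixes z :: complex
  assumes "\<forall>x\<in>set xs. cmod x < cmod z" "xs \<noteq> []"
  shows "0 < Re (z * (\<Sum>x\<leftarrow>xs. 1/(z-x)))"
  using assms
proof (induction xs)
  case Nil then show ?case by simp
next
  case (Cons a xs)
  have "z * (\<Sum>x\<leftarrow>a#xs. 1/(z-x)) = z / (z - a) + z * (\<Sum>x\<leftarrow>xs. 1/(z-x))"
    by (simp add: algebra_simps)
  moreover have "0 < Re (z / (z - a))" using Cons.prems by (intro re_div_pos) auto
  moreover have "0 \<le> Re (z * (\<Sum>x\<leftarrow>xs. 1/(z-x)))"
    using Cons by (cases "xs = []") auto
  ultimately show ?case by simp
qed

lemma sum_inv_lower:
  fixes z :: complex
  assumes "\<forall>x\<in>set xs. cmod x < R" "3 * R \<le> cmod z" "0 < R"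
  shows "length xs / (2 * cmod z) \<le> cmod (\<Sum>x\<leftarrow>xs. 1/(z-x))"
proof -
  have z: "0 < cmod z" using assms by linarith
  have "length xs / 2 \<le> cmod (z * (\<Sum>x\<leftarrow>xs. 1/(z-x)))"
    using re_sum_lower[OF assms(1,2)] complex_Re_le_cmod order_trans by blast
  hence "length xs / 2 \<le> cmod z * cmod (\<Sum>x\<leftarrow>xs. 1/(z-x))" by (simp add: norm_mult)
  thus ?thesis using z by (simp add: field_simps)
qed

lemma deriv_roots_in_ball:
  fixes c :: complex
  assumes "\<forall>x\<in>set xs. cmod x < R" "xs \<noteq> []" "c \<noteq> 0" "R \<le> cmod z"
  shows "poly (pderiv (smult c (lin xs))) z \<noteq> 0"
proof -
  have nz: "poly (lin xs) z \<noteq> 0" using assms by (auto simp: poly_lin_zero)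
  have "0 < Re (z * (\<Sum>x\<leftarrow>xs. 1/(z-x)))" using assms by (intro re_sum_pos) auto
  hence "(\<Sum>x\<leftarrow>xs. 1/(z-x)) \<noteq> 0" by auto
  thus ?thesis using pderiv_lin[OF nz] nz assms(3) by (simp add: pderiv_smult)
qed

lemma local_count:
  fixes p :: "complex poly" and h :: "complex \<Rightarrow> complex"
  assumes p: "p = smult c (lin ys)"
    and hol: "h holomorphic_on S" and S: "open S" "cball a (3*r) \<subseteq> S" and r: "0 < r"
    and bnd: "\<And>z. z \<in> sphere a (3*r) \<Longrightarrow> cmod (poly p z * h z) \<le> S0"
    and z0: "z0 \<in> cball a (r/2)"
  shows "cmod (poly p z0 * h z0) \<le> S0 * (3/4) ^ length (filter (\<lambda>x. x \<in> cball a r) ys)"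
proof -
  define D where "D = filter (\<lambda>x. x \<in> cball a r) ys"
  define E where "E = filter (\<lambda>x. \<not> x \<in> cball a r) ys"
  define N where "N = length D"
  define G where "G = (\<lambda>z. c * poly (lin E) z * h z)"
  have split: "poly p z * h z = poly (lin D) z * G z" for z
    unfolding p G_def D_def E_def by (subst lin_filter[of _ "\<lambda>x. x \<in> cball a r"]) (simp add: algebra_simps)
  have Dsph: "(2*r)^N \<le> cmod (poly (lin D) z)" if z: "z \<in> sphere a (3*r)" for z
    unfolding N_def
  proof (rule norm_lin_ge)
    show "\<forall>x\<in>set D. 2 * r \<le> cmod (z - x)"
    proof
      fix x assume "x \<in> set D"
      hence "dist a x \<le> r" by (simp add: D_def)
      moreover have "dist a z = 3*r" using z by simp
      moreover have "dist a z \<le> dist a x + dist x z" by (rule dist_triangle)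
      ultimately show "2 * r \<le> cmod (z - x)" by (simp add: dist_norm norm_minus_commute)
    qed
  qed (use r in auto)
  have Gsph: "cmod (G z) \<le> S0 / (2*r)^N" if z: "z \<in> sphere a (3*r)" for z
  proof -
    have pos: "0 < (2*r)^N" using r by simp
    have "(2*r)^N * cmod (G z) \<le> cmod (poly (lin D) z) * cmod (G z)"
      using Dsph[OF z] by (intro mult_right_mono) auto
    also have "\<dots> = cmod (poly p z * h z)" by (simp add: split norm_mult)
    also have "\<dots> \<le> S0" using bnd[OF z] .
    finally show ?thesis using pos by (simp add: field_simps)
  qed
  have holG: "G holomorphic_on S" unfolding G_def using hol by (intro holomorphic_intros) auto
  have h1: "G holomorphic_on interior (ball a (3 * r))"
    using holG S by (metis ball_subset_cball holomorphic_on_subset interior_ball subset_trans)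
  have h2: "continuous_on (closure (ball a (3 * r))) G"
    using holG S r by (auto intro: holomorphic_on_imp_continuous_on holomorphic_on_subset)
  have h3: "z0 \<in> ball a (3*r)" using z0 r by auto
  have Gz0: "cmod (G z0) \<le> S0 / (2*r)^N"
    using maximum_modulus_frontier[OF h1 h2 _ _ h3] r Gsph by auto
  have Dz0: "cmod (poly (lin D) z0) \<le> (3*r/2)^N"
    unfolding N_def
  proof (rule norm_lin_le, rule ballI)
    fix x assume "x \<in> set D"
    hence "dist a x \<le> r" by (simp add: D_def)
    moreover have "dist a z0 \<le> r/2" using z0 by simp
    moreover have "dist z0 x \<le> dist a z0 + dist a x" by (rule dist_triangle3)
    ultimately show "cmod (z0 - x) \<le> 3*r/2" by (simp add: dist_norm)
  qed
  have "cmod (poly p z0 * h z0) = cmod (poly (lin D) z0) * cmod (G z0)" by (simp add: split norm_mult)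
  also have "\<dots> \<le> (3*r/2)^N * (S0 / (2*r)^N)"
    using Dz0 Gz0 r by (intro mult_mono) auto
  also have "\<dots> = S0 * ((3*r/2)/(2*r))^N"
    by (metis power_divide times_divide_eq_right mult.commute)
  also have "(3*r/2)/(2*r) = 3/4" using r by simp
  finally show ?thesis by (simp add: N_def D_def)
qed

lemma pc_components_unbounded:
  assumes K: "compact K" and pc: "polynomially_convex K" and x: "x \<notin> K"
  shows "\<not> bounded (connected_component_set (-K) x)"
proof
  assume bV: "bounded (connected_component_set (-K) x)"
  define V where "V = connected_component_set (-K) x"
  have xV: "x \<in> V" using x by (simp add: V_def)
  have fr: "frontier V \<subseteq> K"
  proof -
    have "frontier V \<subseteq> frontier (-K)" unfolding V_def by (rule frontier_of_connected_component_subset)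
    also have "\<dots> = frontier K" by (simp add: frontier_complement)
    also have "\<dots> \<subseteq> K" using K by (simp add: compact_imp_closed frontier_subset_closed)
    finally show ?thesis .
  qed
  have "x \<in> poly_hull K"
    unfolding poly_hull_def
  proof (intro CollectI allI)
    fix p :: "complex poly"
    have bdd: "bdd_above ((\<lambda>w. cmod (poly p w)) ` K)"
    proof -
      have "compact ((\<lambda>w. cmod (poly p w)) ` K)"
        using K by (intro compact_continuous_image continuous_intros)
      thus ?thesis by (auto intro: bounded_imp_bdd_above compact_imp_bounded)
    qed
    show "cmod (poly p x) \<le> (SUP w\<in>K. cmod (poly p w))"
    proof (rule maximum_modulus_frontier[where S=V and f="poly p"])
      show "poly p holomorphic_on interior V" by (intro holomorphic_intros)
      show "continuous_on (closure V) (poly p)" by (intro continuous_intros)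
      show "bounded V" using bV by (simp add: V_def)
      show "x \<in> V" by (rule xV)
      fix z assume "z \<in> frontier V"
      hence "z \<in> K" using fr by auto
      thus "cmod (poly p z) \<le> (SUP w\<in>K. cmod (poly p w))" using bdd by (intro cSUP_upper)
    qed
  qed
  with pc x show False by (simp add: polynomially_convex_def)
qed

lemma infdist_lower:
  assumes "K \<noteq> {}" "\<forall>y\<in>K. d \<le> dist x y"
  shows "d \<le> infdist x K"
  using assms by (simp add: infdist_notempty cINF_greatest)

lemma W_exists:
  fixes K L :: "complex set"
  assumes K: "compact K" "K \<noteq> {}" and pc: "polynomially_convex K"
    and L: "compact L" "L \<inter> K = {}" and zs: "zs \<notin> K"
  obtains \<delta> W where "0 < \<delta>" "open W" "connected W" "L \<subseteq> W" "zs \<in> W"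
    "\<And>z y. z \<in> W \<Longrightarrow> y \<in> K \<Longrightarrow> 2*\<delta> < dist z y"
proof -
  define L2 where "L2 = insert zs L"
  have L2: "compact L2" "L2 \<inter> K = {}" using L zs by (auto simp: L2_def)
  have bK: "bounded (- (- K))" using K by (simp add: compact_imp_bounded)
  have ex: "\<exists>d>0. \<exists>T. compact T \<and> connected T \<and> a \<in> T \<and> zs \<in> T \<and> (\<forall>x\<in>T. \<forall>y\<in>K. d \<le> dist x y)"
    if a: "a \<in> L2" for a
  proof -
    have aK: "a \<notin> K" using a L2 by auto
    have "connected_component_set (-K) a = connected_component_set (-K) zs"
      using cobounded_unique_unbounded_component[OF bK, of a zs]
        pc_components_unbounded[OF K(1) pc aK] pc_components_unbounded[OF K(1) pc zs] by simp
    hence "connected_component (-K) a zs"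
      using zs by (metis connected_component_eq_eq mem_Collect_eq connected_component_refl_eq ComplI)
    hence "path_component (-K) a zs"
      using open_path_connected_component[of "-K" a] K(1) by (simp add: compact_imp_closed open_Compl)
    then obtain g where g: "path g" "path_image g \<subseteq> -K" "pathstart g = a" "pathfinish g = zs"
      by (auto simp: path_component_def)
    have "compact (path_image g)" using g by (simp add: compact_path_image)
    then obtain d where d: "d > 0" "\<forall>x\<in>path_image g. \<forall>y\<in>K. d \<le> dist x y"
      using separate_compact_closed[of "path_image g" K] g(2) K(1) compact_imp_closed by blast
    show ?thesis
      using d g \<open>compact (path_image g)\<close> connected_path_image
      by (intro exI[of _ d] conjI exI[of _ "path_image g"]) (auto)
  qed
  then obtain d T where dT: "\<And>a. a \<in> L2 \<Longrightarrow> d a > 0 \<and> compact (T a) \<and> connected (T a) \<and> a \<in> T a \<and> zs \<in> T a \<and> (\<forall>x\<in>T a. \<forall>y\<in>K. d a \<le> dist x y)"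
    by metis
  have cov: "L2 \<subseteq> (\<Union>a\<in>L2. ball a (d a / 2))" using dT by force
  obtain A where A: "A \<subseteq> L2" "finite A" "L2 \<subseteq> (\<Union>a\<in>A. ball a (d a / 2))"
    using compactE_image[OF L2(1) _ cov] by (metis open_ball)
  have Ane: "A \<noteq> {}" using A(3) by (auto simp: L2_def)
  define \<delta> where "\<delta> = Min ((\<lambda>a. d a / 8) ` A)"
  have \<delta>pos: "0 < \<delta>" unfolding \<delta>_def using A Ane dT by (subst Min_gr_iff) auto
  have \<delta>le: "\<delta> \<le> d a / 8" if "a \<in> A" for a unfolding \<delta>_def using A that by (intro Min_le) auto
  define S where "S = {z. 2*\<delta> < infdist z K}"
  have oS: "open S" unfolding S_def by (intro open_Collect_less continuous_intros)
  define W where "W = connected_component_set S zs"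
  have inW: "b \<in> W" if b: "b \<in> L2" for b
  proof -
    obtain a where a: "a \<in> A" "b \<in> ball a (d a / 2)" using A(3) b by auto
    have aL: "a \<in> L2" using a A by auto
    note da = dT[OF aL]
    define T' where "T' = closed_segment b a \<union> T a"
    have "connected T'" unfolding T'_def using da
      by (intro connected_Un) (auto simp: ends_in_segment)
    moreover have "T' \<subseteq> S"
    proof
      fix u assume u: "u \<in> T'"
      have "d a / 2 \<le> infdist u K"
      proof (rule infdist_lower[OF K(2)], rule ballI)
        fix y assume y: "y \<in> K"
        show "d a / 2 \<le> dist u y"
        proof (cases "u \<in> T a")
          case True thus ?thesis using da y by force
        next
          case False
          hence "u \<in> closed_segment b a" using u by (auto simp: T'_def)
          hence "dist u a \<le> dist b a" by (metis dist_commute dist_in_closed_segment)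
          moreover have "dist b a < d a / 2" using a by (simp add: dist_commute)
          moreover have "d a \<le> dist a y" using da y by auto
          moreover have "dist a y \<le> dist a u + dist u y" by (rule dist_triangle)
          ultimately show ?thesis by (simp add: dist_commute)
        qed
      qed
      moreover have "2 * \<delta> < d a / 2" using \<delta>le[OF a(1)] da by linarith
      ultimately show "u \<in> S" by (simp add: S_def)
    qed
    moreover have "b \<in> T'" "zs \<in> T'" using da by (auto simp: T'_def)
    ultimately have "connected_component S zs b" by (intro connected_componentI[of T'])
    thus ?thesis by (simp add: W_def)
  qed
  show ?thesis
  proof (rule that[of \<delta> W])
    show "0 < \<delta>" by (rule \<delta>pos)
    show "open W" unfolding W_def using oS by (rule open_connected_component)
    show "connected W" unfolding W_def by simp
    show "L \<subseteq> W" using inW by (auto simp: L2_def)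
    show "zs \<in> W" using inW by (auto simp: L2_def)
    fix z y assume z: "z \<in> W" and y: "y \<in> K"
    have "z \<in> S" using z connected_component_subset unfolding W_def by blast
    hence "2*\<delta> < infdist z K" by (simp add: S_def)
    also have "\<dots> \<le> dist z y" using y by (rule infdist_le)
    finally show "2*\<delta> < dist z y" .
  qed
qed

lemma norm_sum_list_le:
  fixes f :: "complex \<Rightarrow> complex" and b :: real
  assumes "\<forall>x\<in>set xs. cmod (f x) \<le> b"
  shows "cmod (\<Sum>x\<leftarrow>xs. f x) \<le> length xs * b"
  using assms
proof (induction xs)
  case Nil then show ?case by simp
next
  case (Cons a xs)
  have "cmod (\<Sum>x\<leftarrow>a#xs. f x) \<le> cmod (f a) + cmod (\<Sum>x\<leftarrow>xs. f x)"
    by (simp add: norm_triangle_ineq)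
  also have "\<dots> \<le> b + length xs * b" using Cons by (intro add_mono) auto
  finally show ?case by (simp add: algebra_simps)
qed

definition nearK :: "complex set \<Rightarrow> real \<Rightarrow> complex \<Rightarrow> bool" where
  "nearK K \<delta> x \<longleftrightarrow> (\<exists>y\<in>K. dist x y < \<delta>)"

definition Fk :: "complex set \<Rightarrow> real \<Rightarrow> complex poly \<Rightarrow> complex list \<Rightarrow> complex \<Rightarrow> complex" where
  "Fk K \<delta> q xs z = poly (pderiv q) z /
      (lead_coeff q * of_nat (degree q) * poly (lin (filter (nearK K \<delta>) xs)) z)"

lemma P_nz:
  assumes "\<forall>y\<in>K. 2*\<delta> < dist z y" "0 < \<delta>"
  shows "poly (lin (filter (nearK K \<delta>) xs)) z \<noteq> 0"
proof
  assume "poly (lin (filter (nearK K \<delta>) xs)) z = 0"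
  then obtain x y where "y \<in> K" "dist x y < \<delta>" "x = z"
    by (auto simp: poly_lin_zero nearK_def)
  with assms show False by force
qed

lemma P_far:
  assumes "\<forall>y\<in>K. 2*\<delta> < dist z y" "x \<in> set (filter (nearK K \<delta>) xs)"
  shows "\<delta> < cmod (z - x)"
proof -
  obtain y where y: "y \<in> K" "dist x y < \<delta>" using assms(2) by (auto simp: nearK_def)
  have "dist z y \<le> dist z x + dist x y" by (rule dist_triangle)
  with y assms(1) show ?thesis by (force simp: dist_norm)
qed

lemma Fk_hol:
  assumes W: "\<And>z y. z \<in> W \<Longrightarrow> y \<in> K \<Longrightarrow> 2*\<delta> < dist z y" and d: "0 < \<delta>"
  shows "(\<lambda>z. 1 / (lead_coeff q * of_nat (degree q) * poly (lin (filter (nearK K \<delta>) xs)) z)) holomorphic_on W"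
    and "Fk K \<delta> q xs z = poly (pderiv q) z * (1 / (lead_coeff q * of_nat (degree q) * poly (lin (filter (nearK K \<delta>) xs)) z))"
proof -
  show "(\<lambda>z. 1 / (lead_coeff q * of_nat (degree q) * poly (lin (filter (nearK K \<delta>) xs)) z)) holomorphic_on W"
  proof -
    have "(\<lambda>z. 1 / (c * poly (lin (filter (nearK K \<delta>) xs)) z)) holomorphic_on W" for c
    proof (cases "c = 0")
      case True thus ?thesis by simp
    next
      case False
      thus ?thesis using P_nz[OF _ d] W by (intro holomorphic_intros) auto
    qed
    thus ?thesis .
  qed
  show "Fk K \<delta> q xs z = poly (pderiv q) z * (1 / (lead_coeff q * of_nat (degree q) * poly (lin (filter (nearK K \<delta>) xs)) z))"
    by (simp add: Fk_def)
qed

lemma Fk_formula: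
  assumes q: "q = smult (lead_coeff q) (lin xs)" "q \<noteq> 0"
    and Pz: "poly (lin (filter (nearK K \<delta>) xs)) z \<noteq> 0"
    and n: "degree q \<ge> 1"
  shows "Fk K \<delta> q xs z = (poly (pderiv (lin (filter (\<lambda>x. \<not> nearK K \<delta> x) xs))) z +
      poly (lin (filter (\<lambda>x. \<not> nearK K \<delta> x) xs)) z * (\<Sum>x\<leftarrow>filter (nearK K \<delta>) xs. 1/(z-x))) / of_nat (degree q)"
proof -
  define P where "P = lin (filter (nearK K \<delta>) xs)"
  define Q where "Q = lin (filter (\<lambda>x. \<not> nearK K \<delta> x) xs)"
  define c where "c = lead_coeff q"
  have c: "c \<noteq> 0" using q by (simp add: c_def)
  have qPQ: "q = smult c (P * Q)" using q lin_filter[of xs "nearK K \<delta>"] by (simp add: P_def Q_def c_def)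
  have "poly (pderiv q) z = c * (poly P z * poly (pderiv Q) z + poly Q z * poly (pderiv P) z)"
    by (simp add: qPQ pderiv_smult pderiv_mult)
  also have "poly (pderiv P) z = poly P z * (\<Sum>x\<leftarrow>filter (nearK K \<delta>) xs. 1/(z-x))"
    unfolding P_def by (rule pderiv_lin) (use Pz in simp)
  finally have "poly (pderiv q) z = c * poly P z * (poly (pderiv Q) z + poly Q z * (\<Sum>x\<leftarrow>filter (nearK K \<delta>) xs. 1/(z-x)))"
    by (simp add: algebra_simps)
  moreover have "of_nat (degree q) \<noteq> (0::complex)" using n by simp
  ultimately show ?thesis using Pz c unfolding Fk_def P_def[symmetric] Q_def[symmetric] c_def[symmetric]
    by (simp add: field_simps)
qed

lemma Fk_upper:
  assumes q: "q = smult (lead_coeff q) (lin xs)" "q \<noteq> 0" "length xs = degree q"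
    and R: "\<forall>x\<in>set xs. cmod x < R"
    and W: "\<forall>y\<in>K. 2*\<delta> < dist z y" and d: "0 < \<delta>"
    and n: "degree q \<ge> 1"
    and M0: "length (filter (\<lambda>x. \<not> nearK K \<delta> x) xs) \<le> M0"
  shows "cmod (Fk K \<delta> q xs z) \<le> (cmod z + R + 1)^M0 / \<delta> + M0 * (cmod z + R + 1)^M0"
proof -
  define Bz where "Bz = cmod z + R + 1"
  define far where "far = filter (\<lambda>x. \<not> nearK K \<delta> x) xs"
  define nr where "nr = filter (nearK K \<delta>) xs"
  have Pz: "poly (lin nr) z \<noteq> 0" using P_nz[OF W d] by (simp add: nr_def)
  have R0: "0 \<le> R" using n q(3) R by (cases xs) (auto intro: order_trans[OF norm_ge_zero less_imp_le])
  have B1: "1 \<le> Bz" using R0 by (simp add: Bz_def)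
  have farB: "\<forall>x\<in>set far. cmod (z - x) \<le> Bz"
  proof
    fix x assume "x \<in> set far"
    hence "cmod x < R" using R by (auto simp: far_def)
    thus "cmod (z - x) \<le> Bz" using norm_triangle_ineq4[of z x] by (simp add: Bz_def)
  qed
  have Q1: "cmod (poly (lin far) z) \<le> Bz ^ M0"
    using norm_lin_le[OF farB] power_increasing[OF M0[folded far_def] B1] by linarith
  have Q2: "cmod (poly (pderiv (lin far)) z) \<le> M0 * Bz ^ M0"
  proof -
    have "cmod (poly (pderiv (lin far)) z) \<le> length far * Bz ^ length far"
      by (rule norm_pderiv_lin_le[OF farB B1])
    also have "\<dots> \<le> M0 * Bz ^ M0"
      using M0 B1 by (intro mult_mono power_increasing) (auto simp: far_def)
    finally show ?thesis .
  qed
  have S1: "cmod (\<Sum>x\<leftarrow>nr. 1/(z-x)) \<le> degree q * (1/\<delta>)"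
  proof -
    have "cmod (\<Sum>x\<leftarrow>nr. 1/(z-x)) \<le> length nr * (1/\<delta>)"
    proof (rule norm_sum_list_le, rule ballI)
      fix x assume "x \<in> set nr"
      hence "\<delta> < cmod (z - x)" using P_far[OF W] by (simp add: nr_def)
      thus "cmod (1/(z-x)) \<le> 1/\<delta>" using d by (simp add: norm_divide divide_simps)
    qed
    also have "\<dots> \<le> degree q * (1/\<delta>)"
      using d q(3) length_filter_le[of "nearK K \<delta>" xs] by (intro mult_right_mono) (auto simp: nr_def)
    finally show ?thesis .
  qed
  have "Fk K \<delta> q xs z = (poly (pderiv (lin far)) z + poly (lin far) z * (\<Sum>x\<leftarrow>nr. 1/(z-x))) / of_nat (degree q)"
    using Fk_formula[OF q(1,2) _ n] Pz by (simp add: far_def nr_def)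
  hence "cmod (Fk K \<delta> q xs z) = cmod (poly (pderiv (lin far)) z + poly (lin far) z * (\<Sum>x\<leftarrow>nr. 1/(z-x))) / degree q"
    by (simp add: norm_divide)
  also have "\<dots> \<le> (M0 * Bz ^ M0 + Bz ^ M0 * (degree q * (1/\<delta>))) / degree q"
  proof (rule divide_right_mono)
    have "cmod (poly (pderiv (lin far)) z + poly (lin far) z * (\<Sum>x\<leftarrow>nr. 1/(z-x)))
        \<le> cmod (poly (pderiv (lin far)) z) + cmod (poly (lin far) z) * cmod (\<Sum>x\<leftarrow>nr. 1/(z-x))"
      by (metis norm_mult norm_triangle_ineq)
    also have "\<dots> \<le> M0 * Bz ^ M0 + Bz ^ M0 * (degree q * (1/\<delta>))"
      using Q1 Q2 S1 B1 by (intro add_mono mult_mono) auto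
    finally show "cmod (poly (pderiv (lin far)) z + poly (lin far) z * (\<Sum>x\<leftarrow>nr. 1/(z-x))) \<le> M0 * Bz ^ M0 + Bz ^ M0 * (degree q * (1/\<delta>))" .
  qed simp
  also have "\<dots> = M0 * Bz ^ M0 / degree q + Bz ^ M0 / \<delta>"
    using n by (simp add: field_simps)
  also have "\<dots> \<le> M0 * Bz ^ M0 + Bz ^ M0 / \<delta>"
  proof -
    have "M0 * Bz ^ M0 / degree q \<le> M0 * Bz ^ M0 / 1"
      using n B1 by (intro divide_left_mono) auto
    thus ?thesis by simp
  qed
  finally show ?thesis by (simp add: Bz_def)
qed

lemma Fk_lower:
  assumes q: "q = smult (lead_coeff q) (lin xs)" "q \<noteq> 0" "length xs = degree q"
    and R: "\<forall>x\<in>set xs. cmod x < R" and R0: "0 < R"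
    and n: "degree q \<ge> 1"
    and zs: "cmod zs = \<rho>" "3 * R \<le> \<rho>" "R + 1 \<le> \<rho>"
  shows "1 / (2 * \<rho>) \<le> cmod (Fk K \<delta> q xs zs)"
proof -
  define far where "far = filter (\<lambda>x. \<not> nearK K \<delta> x) xs"
  define nr where "nr = filter (nearK K \<delta>) xs"
  have ne: "poly (lin ys) zs \<noteq> 0" if "set ys \<subseteq> set xs" for ys
    using that R zs R0 by (force simp: poly_lin_zero)
  have Pz: "poly (lin nr) zs \<noteq> 0" by (rule ne) (auto simp: nr_def)
  have Fz: "Fk K \<delta> q xs zs = (poly (pderiv (lin far)) zs + poly (lin far) zs * (\<Sum>x\<leftarrow>nr. 1/(zs-x))) / of_nat (degree q)"
    using Fk_formula[OF q(1,2) _ n] Pz by (simp add: far_def nr_def)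
  have Qz: "poly (lin far) zs \<noteq> 0" by (rule ne) (auto simp: far_def)
  have "poly (pderiv (lin far)) zs = poly (lin far) zs * (\<Sum>x\<leftarrow>far. 1/(zs-x))"
    by (rule pderiv_lin[OF Qz])
  hence Fz2: "Fk K \<delta> q xs zs = poly (lin far) zs * ((\<Sum>x\<leftarrow>far. 1/(zs-x)) + (\<Sum>x\<leftarrow>nr. 1/(zs-x))) / of_nat (degree q)"
    using Fz by (simp add: algebra_simps)
  have sum_eq: "(\<Sum>x\<leftarrow>far. 1/(zs-x)) + (\<Sum>x\<leftarrow>nr. 1/(zs-x)) = (\<Sum>x\<leftarrow>xs. 1/(zs-x))"
    unfolding far_def nr_def by (induction xs) auto
  have Q1: "1 \<le> cmod (poly (lin far) zs)"
  proof -
    have "(1::real) ^ length far \<le> cmod (poly (lin far) zs)"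
    proof (rule norm_lin_ge, rule ballI)
      fix x assume "x \<in> set far"
      hence "cmod x < R" using R by (auto simp: far_def)
      thus "1 \<le> cmod (zs - x)" using norm_triangle_ineq2[of zs x] zs by linarith
    qed simp
    thus ?thesis by simp
  qed
  have S: "degree q / (2 * \<rho>) \<le> cmod (\<Sum>x\<leftarrow>xs. 1/(zs-x))"
    using sum_inv_lower[OF R _ R0, of zs] zs q(3) by simp
  have rho: "0 < \<rho>" using zs R0 by linarith
  have "cmod (Fk K \<delta> q xs zs) = cmod (poly (lin far) zs) * cmod (\<Sum>x\<leftarrow>xs. 1/(zs-x)) / degree q"
    using Fz2 sum_eq by (simp add: norm_mult norm_divide)
  also have "\<dots> \<ge> 1 * (degree q / (2 * \<rho>)) / degree q"
    using Q1 S n rho by (intro divide_right_mono mult_mono) auto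
  finally show ?thesis using n by simp
qed



lemma count_cover:
  assumes "finite A" "\<forall>x\<in>set ys. x \<in> L \<longrightarrow> (\<exists>a\<in>A. x \<in> B a)"
  shows "length (filter (\<lambda>x. x \<in> L) ys) \<le> (\<Sum>a\<in>A. length (filter (\<lambda>x. x \<in> B a) ys))"
  using assms(2)
proof (induction ys)
  case Nil then show ?case by simp
next
  case (Cons y ys)
  have eq: "(\<Sum>a\<in>A. length (filter (\<lambda>x. x \<in> B a) (y#ys))) =
      (\<Sum>a\<in>A. (if y \<in> B a then 1 else 0)) + (\<Sum>a\<in>A. length (filter (\<lambda>x. x \<in> B a) ys))"
    by (subst sum.distrib[symmetric]) (rule sum.cong, auto)
  show ?case
  proof (cases "y \<in> L")
    case True
    then obtain a0 where a0: "a0 \<in> A" "y \<in> B a0" using Cons.prems by auto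
    have "1 \<le> (\<Sum>a\<in>A. (if y \<in> B a then 1 else 0::nat))"
      using member_le_sum[OF a0(1), of "\<lambda>a. if y \<in> B a then 1 else 0::nat"] assms(1) a0 by auto
    thus ?thesis using Cons True eq by simp
  next
    case False thus ?thesis using Cons eq by simp
  qed
qed

lemma step:
  fixes K :: "complex set" and q :: "nat \<Rightarrow> complex poly"
  assumes K: "compact K" "K \<noteq> {}" and pc: "polynomially_convex K"
    and deg: "filterlim (\<lambda>k. degree (q k)) at_top sequentially"
    and cen: "centers_on q K"
  shows "centers_on (\<lambda>k. pderiv (q k)) K"
proof -
  obtain R k0 where R: "R > 0"
    and H1: "\<And>k. k \<ge> k0 \<Longrightarrow> q k \<noteq> 0 \<and> (\<forall>z. poly (q k) z = 0 \<longrightarrow> cmod z < R)"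
    and H2: "\<And>L. closed L \<Longrightarrow> L \<inter> K = {} \<Longrightarrow> (\<exists>M. \<forall>k\<ge>k0. zero_count (q k) L \<le> M)"
  proof -
    from cen obtain R where R: "R > 0" and ex: "\<exists>k0. (\<forall>k\<ge>k0. q k \<noteq> 0 \<and> (\<forall>z. poly (q k) z = 0 \<longrightarrow> cmod z < R)) \<and>
        (\<forall>L. closed L \<and> L \<inter> K = {} \<longrightarrow> (\<exists>M. \<forall>k\<ge>k0. zero_count (q k) L \<le> M))"
      unfolding centers_on_def by (elim exE conjE) (rule that, assumption, rule exI, rule conjI, assumption+)
    from ex obtain k0 where a: "\<forall>k\<ge>k0. q k \<noteq> 0 \<and> (\<forall>z. poly (q k) z = 0 \<longrightarrow> cmod z < R)"
      and b: "\<forall>L. closed L \<and> L \<inter> K = {} \<longrightarrow> (\<exists>M. \<forall>k\<ge>k0. zero_count (q k) L \<le> M)"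
      by (elim exE conjE)
    show ?thesis by (rule that[OF R]) (use a b in auto)
  qed
  have "eventually (\<lambda>k. 1 \<le> degree (q k)) sequentially"
    using deg unfolding filterlim_at_top by blast
  then obtain N1 where N1: "\<And>k. k \<ge> N1 \<Longrightarrow> 1 \<le> degree (q k)"
    by (auto simp: eventually_sequentially)
  define k1 where "k1 = max N1 k0"
  have qk: "q k \<noteq> 0" "1 \<le> degree (q k)" "\<And>z. poly (q k) z = 0 \<Longrightarrow> cmod z < R" if "k \<ge> k1" for k
  proof -
    have "k \<ge> k0" "k \<ge> N1" using that by (auto simp: k1_def)
    thus "q k \<noteq> 0" "1 \<le> degree (q k)" "\<And>z. poly (q k) z = 0 \<Longrightarrow> cmod z < R"
      using H1[of k] N1[of k] by blast+
  qed
  define Pr where "Pr = (\<lambda>p xs. p = smult (lead_coeff p) (lin xs) \<and> length xs = degree p \<and>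
      set xs = {z. poly p z = 0} \<and> (\<forall>L. zero_count p L = length (filter (\<lambda>x. x \<in> L) xs)))"
  have exPr: "\<exists>xs. Pr p xs" if pnz: "p \<noteq> 0" for p
  proof -
    obtain xs where a: "p = smult (lead_coeff p) (lin xs)" and b: "length xs = degree p"
      and c: "set xs = {z. poly p z = 0}" and d: "\<And>L. zero_count p L = length (filter (\<lambda>x. x \<in> L) xs)"
      using poly_roots_list[OF pnz] by blast
    have "Pr p xs" unfolding Pr_def by (intro conjI allI) (rule a, rule b, rule c, rule d)
    thus ?thesis by blast
  qed
  define xs where "xs = (\<lambda>k. SOME xs. Pr (q k) xs)"
  define ys where "ys = (\<lambda>k. SOME xs. Pr (pderiv (q k)) xs)"
  have dnz: "pderiv (q k) \<noteq> 0" if "k \<ge> k1" for k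
    using qk[OF that] by (simp add: pderiv_eq_0_iff)
  have xs: "Pr (q k) (xs k)" if "k \<ge> k1" for k
    unfolding xs_def by (rule someI_ex[OF exPr[OF qk(1)[OF that]]])
  have ys: "Pr (pderiv (q k)) (ys k)" if "k \<ge> k1" for k
    unfolding ys_def by (rule someI_ex[OF exPr[OF dnz[OF that]]])
  have xs_eq: "q k = smult (lead_coeff (q k)) (lin (xs k))"
    and xs_len: "length (xs k) = degree (q k)"
    and xs_set: "set (xs k) = {z. poly (q k) z = 0}"
    and xs_zc: "\<And>L. zero_count (q k) L = length (filter (\<lambda>x. x \<in> L) (xs k))" if "k \<ge> k1" for k
    using xs[OF that] unfolding Pr_def by blast+
  have ys_eq: "pderiv (q k) = smult (lead_coeff (pderiv (q k))) (lin (ys k))"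
    and ys_set: "set (ys k) = {z. poly (pderiv (q k)) z = 0}"
    and ys_zc: "\<And>L. zero_count (pderiv (q k)) L = length (filter (\<lambda>x. x \<in> L) (ys k))" if "k \<ge> k1" for k
    using ys[OF that] unfolding Pr_def by blast+
  have xsR: "\<forall>x\<in>set (xs k). cmod x < R" if "k \<ge> k1" for k
    using xs_set[OF that] qk(3)[OF that] by auto
  have droots: "cmod z < R" if "k \<ge> k1" "poly (pderiv (q k)) z = 0" for k z
  proof (rule ccontr)
    assume "\<not> cmod z < R"
    hence z: "R \<le> cmod z" by simp
    have ne: "xs k \<noteq> []" using xs_len[OF that(1)] qk(2)[OF that(1)] by auto
    have lc: "lead_coeff (q k) \<noteq> 0" using qk(1)[OF that(1)] by simp
    have "poly (pderiv (smult (lead_coeff (q k)) (lin (xs k)))) z \<noteq> 0"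
      by (rule deriv_roots_in_ball[OF xsR[OF that(1)] ne lc z])
    thus False using that(2) xs_eq[OF that(1)] by metis
  qed
  have main: "\<exists>M. \<forall>k\<ge>k1. zero_count (pderiv (q k)) L \<le> M" if L: "closed L" "L \<inter> K = {}" for L
  proof (rule ccontr)
    assume nb: "\<not> (\<exists>M. \<forall>k\<ge>k1. zero_count (pderiv (q k)) L \<le> M)"
    define cnt where "cnt = (\<lambda>k. zero_count (pderiv (q k)) L)"
    have exs: "\<exists>k. n \<le> k \<and> k1 \<le> k \<and> n < cnt k" for n
    proof (rule ccontr)
      assume "\<not> (\<exists>k. n \<le> k \<and> k1 \<le> k \<and> n < cnt k)"
      hence a: "\<And>k. n \<le> k \<Longrightarrow> k1 \<le> k \<Longrightarrow> cnt k \<le> n" by force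
      have "\<forall>k\<ge>k1. zero_count (pderiv (q k)) L \<le> n + (\<Sum>j<n. cnt j)"
      proof (intro allI impI)
        fix k assume k: "k1 \<le> k"
        show "zero_count (pderiv (q k)) L \<le> n + (\<Sum>j<n. cnt j)"
        proof (cases "n \<le> k")
          case True thus ?thesis using a[OF True k] by (simp add: cnt_def)
        next
          case False
          hence "cnt k \<le> (\<Sum>j<n. cnt j)" by (intro member_le_sum) auto
          thus ?thesis by (simp add: cnt_def)
        qed
      qed
      with nb show False by blast
    qed
    then obtain s where s: "\<And>n. n \<le> s n" "\<And>n. k1 \<le> s n" "\<And>n. n < cnt (s n)"
      by metis
    obtain BK where BK: "\<And>y. y \<in> K \<Longrightarrow> cmod y \<le> BK"
      using compact_imp_bounded[OF K(1)] by (auto simp: bounded_iff)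
    define \<rho> where "\<rho> = max (max (3*R) (R+1)) (BK+1)"
    define zs where "zs = complex_of_real \<rho>"
    have \<rho>: "3*R \<le> \<rho>" "R + 1 \<le> \<rho>" "BK + 1 \<le> \<rho>" "0 < \<rho>" using R by (auto simp: \<rho>_def)
    have zsn: "cmod zs = \<rho>" using \<rho> by (simp add: zs_def)
    have zsK: "zs \<notin> K" using BK[of zs] zsn \<rho> by auto
    define L' where "L' = L \<inter> cball 0 R"
    have L': "compact L'" "L' \<inter> K = {}" using L by (auto simp: L'_def compact_Int_closed)
    obtain \<delta> W where d: "0 < \<delta>" and W: "open W" "connected W" "L' \<subseteq> W" "zs \<in> W"
      and Wd: "\<And>z y. z \<in> W \<Longrightarrow> y \<in> K \<Longrightarrow> 2*\<delta> < dist z y"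
      using W_exists[OF K pc L' zsK] by blast
    define LU where "LU = {z. \<forall>y\<in>K. \<delta> \<le> dist z y}"
    have LU: "closed LU" "LU \<inter> K = {}"
    proof -
      have "LU = (\<Inter>y\<in>K. {z. \<delta> \<le> dist z y})" by (auto simp: LU_def)
      moreover have "closed {z. \<delta> \<le> dist z y}" for y by (intro closed_Collect_le continuous_intros)
      ultimately show "closed LU" by auto
      show "LU \<inter> K = {}" using d by (force simp: LU_def)
    qed
    obtain M0 where M0: "\<And>k. k \<ge> k0 \<Longrightarrow> zero_count (q k) LU \<le> M0" using H2[OF LU] by blast
    have farM: "length (filter (\<lambda>x. \<not> nearK K \<delta> x) (xs k)) \<le> M0" if k: "k \<ge> k1" for k
    proof -
      have "zero_count (q k) LU = length (filter (\<lambda>x. x \<in> LU) (xs k))" by (rule xs_zc[OF k])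
      also have "filter (\<lambda>x. x \<in> LU) (xs k) = filter (\<lambda>x. \<not> nearK K \<delta> x) (xs k)"
        by (rule filter_cong) (auto simp: LU_def nearK_def not_less)
      finally show ?thesis using M0[of k] k by (simp add: k1_def)
    qed
    define F where "F = (\<lambda>i. Fk K \<delta> (q (s i)) (xs (s i)))"
    define Bd where "Bd = (\<lambda>T::real. (T + R + 1)^M0 / \<delta> + M0 * (T + R + 1)^M0)"
    have Bdmono: "Bd T \<le> Bd T'" if "0 \<le> T" "T \<le> T'" for T T'
      unfolding Bd_def using that R d
      by (intro add_mono mult_left_mono divide_right_mono power_mono) auto
    have Bdpos: "0 < Bd T" if "0 \<le> T" for T
      unfolding Bd_def using that R d by (intro add_pos_nonneg) auto
    have Fup: "cmod (F i z) \<le> Bd (cmod z)" if "z \<in> W" for i z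
      unfolding F_def Bd_def
    proof (rule Fk_upper[OF xs_eq[OF s(2)] qk(1)[OF s(2)] xs_len[OF s(2)] xsR[OF s(2)] _ d qk(2)[OF s(2)] farM[OF s(2)]])
      show "\<forall>y\<in>K. 2 * \<delta> < dist z y" using Wd[OF that] by auto
    qed
    define h where "h = (\<lambda>i z. 1 / (lead_coeff (q (s i)) * of_nat (degree (q (s i))) * poly (lin (filter (nearK K \<delta>) (xs (s i)))) z))"
    have hhol: "h i holomorphic_on W" for i
      unfolding h_def using Fk_hol(1)[OF Wd d] by blast
    have Fh: "F i z = poly (pderiv (q (s i))) z * h i z" for i z
      unfolding F_def h_def using Fk_hol(2)[OF Wd d] by blast
    have Fhol: "F i holomorphic_on W" for i
    proof -
      have "(\<lambda>z. poly (pderiv (q (s i))) z * h i z) holomorphic_on W"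
        using hhol by (intro holomorphic_intros) auto
      moreover have "F i = (\<lambda>z. poly (pderiv (q (s i))) z * h i z)" using Fh by auto
      ultimately show ?thesis by simp
    qed
    have bndC: "\<exists>B. \<forall>h\<in>range F. \<forall>z\<in>C. norm (h z) \<le> B" if C: "compact C" "C \<subseteq> W" for C
    proof -
      obtain T where T: "\<And>z. z \<in> C \<Longrightarrow> cmod z \<le> T" using compact_imp_bounded[OF C(1)] by (auto simp: bounded_iff)
      show "\<exists>B. \<forall>h\<in>range F. \<forall>z\<in>C. norm (h z) \<le> B"
      proof (intro exI[of _ "Bd T"] ballI)
        fix h z assume hz: "h \<in> range F" "z \<in> C"
        then obtain i where hi: "h = F i" by auto
        have "cmod (F i z) \<le> Bd (cmod z)" using Fup[of z i] C hz by auto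
        also have "\<dots> \<le> Bd T" using Bdmono[of "cmod z" T] T[OF hz(2)] by auto
        finally show "norm (h z) \<le> Bd T" using hi by simp
      qed
    qed
    have holR: "\<And>h. h \<in> range F \<Longrightarrow> h holomorphic_on W" using Fhol by auto
    obtain G r where G: "G holomorphic_on W" "strict_mono (r :: nat \<Rightarrow> nat)"
      and Glim: "\<And>x. x \<in> W \<Longrightarrow> ((\<lambda>n. F (r n) x) \<longlonglongrightarrow> G x)"
      using Montel[OF W(1) holR bndC order_refl] by metis
    have Flow: "1 / (2 * \<rho>) \<le> cmod (F i zs)" for i
      unfolding F_def
      by (rule Fk_lower[OF xs_eq[OF s(2)] qk(1)[OF s(2)] xs_len[OF s(2)] xsR[OF s(2)] R qk(2)[OF s(2)] zsn \<rho>(1,2)])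
    have Gzs: "G zs \<noteq> 0"
    proof -
      have "(\<lambda>n. cmod (F (r n) zs)) \<longlonglongrightarrow> cmod (G zs)" using Glim[OF W(4)] by (rule tendsto_norm)
      hence "1 / (2 * \<rho>) \<le> cmod (G zs)" using Flow by (intro Lim_bounded2) auto
      thus ?thesis using \<rho> by auto
    qed
    have loc: "\<exists>ra za. 0 < ra \<and> cball a (3*ra) \<subseteq> W \<and> za \<in> ball a (ra/2) \<and> G za \<noteq> 0" if a: "a \<in> L'" for a
    proof -
      obtain e where e: "0 < e" "ball a e \<subseteq> W" using W(1,3) a open_contains_ball by blast
      define ra where "ra = e/4"
      have ra: "0 < ra" "cball a (3*ra) \<subseteq> W" using e by (auto simp: ra_def)
      have "\<exists>za\<in>ball a (ra/2). G za \<noteq> 0"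
      proof (rule ccontr)
        assume "\<not> (\<exists>za\<in>ball a (ra/2). G za \<noteq> 0)"
        hence z0: "\<And>z. z \<in> ball a (ra/2) \<Longrightarrow> G z = (\<lambda>_. 0) z" by auto
        have "G zs = (\<lambda>_. 0) zs"
        proof (rule analytic_continuation_open[OF _ W(1) _ W(2) _ G(1) _ z0 W(4)])
          show "ball a (ra/2) \<noteq> {}" using ra by simp
          show "ball a (ra / 2) \<subseteq> W" 
          proof -
            have "ball a (ra/2) \<subseteq> cball a (3*ra)" using ra(1) by (auto simp: subset_iff)
            thus ?thesis using ra(2) by blast
          qed
        qed auto
        with Gzs show False by simp
      qed
      thus ?thesis using ra by blast
    qed
    then obtain ra za where raza: "\<And>a. a \<in> L' \<Longrightarrow> 0 < ra a \<and> cball a (3*ra a) \<subseteq> W \<and> za a \<in> ball a (ra a/2) \<and> G (za a) \<noteq> 0"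
      by metis
    have cov: "L' \<subseteq> (\<Union>a\<in>L'. ball a (ra a))" using raza by force
    obtain A where A: "A \<subseteq> L'" "finite A" "L' \<subseteq> (\<Union>a\<in>A. ball a (ra a))"
      using compactE_image[OF L'(1) _ cov] by (metis open_ball)
    define ga where "ga = (\<lambda>a. cmod (G (za a)) / 2)"
    define Ba where "Ba = (\<lambda>a. Bd (cmod a + 3 * ra a))"
    have gapos: "0 < ga a" if "a \<in> A" for a using raza[of a] A that by (auto simp: ga_def)
    have Bapos: "0 < Ba a" if "a \<in> A" for a using raza[of a] A that Bdpos by (auto simp: Ba_def)
    have exN: "\<exists>N. (3/4::real)^N < ga a / Ba a" if "a \<in> A" for a
    proof -
      have "(\<lambda>n. (3/4::real)^n) \<longlonglongrightarrow> 0" by (intro LIMSEQ_power_zero) simp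
      moreover have "0 < ga a / Ba a" using gapos[OF that] Bapos[OF that] by simp
      ultimately have "eventually (\<lambda>n. (3/4::real)^n < ga a / Ba a) sequentially"
        by (rule order_tendstoD)
      thus ?thesis by (auto simp: eventually_sequentially)
    qed
    then obtain Na where Na: "\<And>a. a \<in> A \<Longrightarrow> (3/4::real)^(Na a) < ga a / Ba a" by metis
    have ev: "eventually (\<lambda>i. \<forall>a\<in>A. ga a < cmod (F (r i) (za a))) sequentially"
    proof (rule eventually_ball_finite[OF A(2)], rule ballI)
      fix a assume a: "a \<in> A"
      have ra: "0 < ra a" "cball a (3*ra a) \<subseteq> W" "za a \<in> ball a (ra a/2)" using raza[of a] a A by auto
      hence "za a \<in> cball a (3*ra a)" by auto
      hence "za a \<in> W" using ra(2) by blast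
      hence "(\<lambda>i. cmod (F (r i) (za a))) \<longlonglongrightarrow> cmod (G (za a))" using Glim by (intro tendsto_norm) auto
      moreover have "ga a < cmod (G (za a))" using gapos[OF a] by (simp add: ga_def)
      ultimately show "eventually (\<lambda>i. ga a < cmod (F (r i) (za a))) sequentially"
        by (rule order_tendstoD)
    qed
    then obtain N2 where N2: "\<And>i. i \<ge> N2 \<Longrightarrow> \<forall>a\<in>A. ga a < cmod (F (r i) (za a))"
      by (auto simp: eventually_sequentially)
    define i where "i = max N2 (\<Sum>a\<in>A. Na a)"
    define k where "k = s (r i)"
    have k: "k \<ge> k1" by (simp add: k_def s(2))
    have cntA: "length (filter (\<lambda>x. x \<in> cball a (ra a)) (ys k)) < Na a" if a: "a \<in> A" for a
    proof (rule ccontr)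
      assume "\<not> ?thesis"
      hence ge: "Na a \<le> length (filter (\<lambda>x. x \<in> cball a (ra a)) (ys k))" by simp
      have aL: "a \<in> L'" using a A by auto
      note ra = raza[OF aL]
      have "cmod (poly (pderiv (q k)) (za a) * h (r i) (za a)) \<le> Ba a * (3/4) ^ length (filter (\<lambda>x. x \<in> cball a (ra a)) (ys k))"
      proof (rule local_count[OF _ hhol W(1)])
        show "pderiv (q k) = smult (lead_coeff (pderiv (q k))) (lin (ys k))" by (rule ys_eq[OF k])
        show "cball a (3 * ra a) \<subseteq> W" "0 < ra a" using ra by auto
        show "za a \<in> cball a (ra a / 2)" using ra by auto
        fix z assume z: "z \<in> sphere a (3 * ra a)"
        hence zW: "z \<in> W" using ra by auto
        have "cmod z \<le> cmod a + 3 * ra a"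
          using z norm_triangle_ineq[of a "z - a"] by (simp add: dist_norm norm_minus_commute)
        hence "Bd (cmod z) \<le> Ba a" unfolding Ba_def by (intro Bdmono) auto
        thus "cmod (poly (pderiv (q k)) z * h (r i) z) \<le> Ba a"
          using Fup[OF zW, of "r i"] Fh[of "r i" z] by (simp add: k_def)
      qed
      also have "\<dots> \<le> Ba a * (3/4)^(Na a)"
        using ge Bapos[OF a] by (intro mult_left_mono power_decreasing) auto
      also have "\<dots> < ga a" using Na[OF a] Bapos[OF a] by (simp add: field_simps)
      finally have "cmod (F (r i) (za a)) < ga a" using Fh[of "r i" "za a"] by (simp add: k_def)
      moreover have "ga a < cmod (F (r i) (za a))" using N2[of i] a by (simp add: i_def)
      ultimately show False by simp
    qed
    have "cnt k = length (filter (\<lambda>x. x \<in> L) (ys k))" unfolding cnt_def by (rule ys_zc[OF k])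
    also have "\<dots> \<le> (\<Sum>a\<in>A. length (filter (\<lambda>x. x \<in> cball a (ra a)) (ys k)))"
    proof (rule count_cover[OF A(2)], intro ballI impI)
      fix x assume x: "x \<in> set (ys k)" "x \<in> L"
      have "poly (pderiv (q k)) x = 0" using ys_set[OF k] x by auto
      hence "cmod x < R" using droots[OF k] by blast
      hence "x \<in> L'" using x by (simp add: L'_def)
      then obtain a where "a \<in> A" "x \<in> ball a (ra a)" using A(3) by auto
      thus "\<exists>a\<in>A. x \<in> cball a (ra a)" using less_imp_le by (auto intro: bexI)
    qed
    also have "\<dots> \<le> (\<Sum>a\<in>A. Na a)" using cntA by (intro sum_mono) (simp add: less_imp_le)
    also have "\<dots> \<le> i" by (simp add: i_def)
    also have "i \<le> r i" using seq_suble[OF G(2)] .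
    also have "r i < cnt k" unfolding k_def by (rule s(3))
    finally show False by simp
  qed
  have c1: "\<forall>k\<ge>k1. pderiv (q k) \<noteq> 0 \<and> (\<forall>z. poly (pderiv (q k)) z = 0 \<longrightarrow> cmod z < R)"
    using dnz droots by auto
  have c2: "\<forall>L. closed L \<and> L \<inter> K = {} \<longrightarrow> (\<exists>M. \<forall>k\<ge>k1. zero_count (pderiv (q k)) L \<le> M)"
    using main by auto
  show ?thesis unfolding centers_on_def using R c1 c2 by blast
qed

lemma iter_step:
  fixes K :: "complex set" and q :: "nat \<Rightarrow> complex poly"
  assumes K: "compact K" "K \<noteq> {}" and pc: "polynomially_convex K"
    and deg: "filterlim (\<lambda>k. degree (q k)) at_top sequentially"
    and cen: "centers_on q K"
  shows "filterlim (\<lambda>k. degree ((pderiv ^^ m) (q k))) at_top sequentially \<and> centers_on (\<lambda>k. (pderiv ^^ m) (q k)) K"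
proof (induction m)
  case 0 then show ?case using deg cen by simp
next
  case (Suc m)
  have eq: "(pderiv ^^ Suc m) p = pderiv ((pderiv ^^ m) p)" for p :: "complex poly" by simp
  have d: "filterlim (\<lambda>k. degree ((pderiv ^^ Suc m) (q k))) at_top sequentially"
    unfolding filterlim_at_top eq degree_pderiv
  proof
    fix Z :: nat
    have "eventually (\<lambda>k. Z + 1 \<le> degree ((pderiv ^^ m) (q k))) sequentially"
      using Suc.IH unfolding filterlim_at_top by blast
    thus "eventually (\<lambda>k. Z \<le> degree ((pderiv ^^ m) (q k)) - 1) sequentially"
      by (rule eventually_mono) auto
  qed
  have "centers_on (\<lambda>k. pderiv ((pderiv ^^ m) (q k))) K"
    using step[OF K pc, of "\<lambda>k. (pderiv ^^ m) (q k)"] Suc.IH by blast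
  thus ?case using d by (simp only: eq)
qed

theorem theoremA:
  fixes K :: "complex set" and q :: "nat \<Rightarrow> complex poly"
  assumes "compact K" and "K \<noteq> {}" and "polynomially_convex K"
    and "filterlim (\<lambda>k. degree (q k)) at_top sequentially"
    and "centers_on q K"
    and "m \<ge> 1"
  shows "centers_on (\<lambda>k. (pderiv ^^ m) (q k)) K"
  using iter_step[OF assms(1-5)] by blast

end
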